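(* Let $\rho\in[0,1)$, $\boldsymbol x\in\mathbb R^n\setminus\{\boldsymbol 0\}$ and $\boldsymbol g=\boldsymbol 1_m+\boldsymbol e\in\mathcal G_\rho$. Consider the expected objective $F(\boldsymbol\xi,\boldsymbol\gamma)=\mathbb E f(\boldsymbol\xi,\boldsymbol\gamma)=\frac1{2m}\|\boldsymbol\xi\boldsymbol\gamma^\top-\boldsymbol x\boldsymbol g^\top\|_F^2$ on $\mathbb R^n\times\Pi^m_+$, where $\Pi^m_+=\{\boldsymbol v\in\mathbb R^m_+:\boldsymbol 1_m^\top\boldsymbol v=m\}$. Write $\boldsymbol\gamma=\boldsymbol 1_m+\boldsymbol\varepsilon$ with $\boldsymbol\varepsilon\in\boldsymbol 1_m^\perp$. Then the only point $(\boldsymbol\xi,\boldsymbol\gamma)\in\mathbb R^n\times\Pi^m_+$ at which both $$\tfrac1m\big(\|\boldsymbol\gamma\|^2\boldsymbol\xi-(\boldsymbol\gamma^\top\boldsymbol g)\boldsymbol x\big)=\boldsymbol 0\quad\text{and}\quad \tfrac1m\big(\|\boldsymbol\xi\|^2\boldsymbol\varepsilon-(\boldsymbol\xi^\top\boldsymbol x)\boldsymbol e\big)=\boldsymbol 0$$ (i.e. the expected gradient in $\boldsymbol\xi$ and the expected projected gradient in $\boldsymbol\gamma$ vanish) is $(\boldsymbol\xi,\boldsymbol\gamma)=(\boldsymbol x,\boldsymbol g)$. Moreover, the expected projected Hessian at this point, $$\boldsymbol H=\frac1m\begin{pmatrix}\|\boldsymbol g\|^2\boldsymbol I_n & \boldsymbol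 x\boldsymbol e^\top\\ \boldsymbol e\boldsymbol x^\top & \|\boldsymbol x\|^2\boldsymbol P\end{pmatrix},$$ satisfies $\boldsymbol u^\top\boldsymbol H\boldsymbol u>0$ for every nonzero $\boldsymbol u\in\mathcal V:=\mathbb R^n\times\boldsymbol 1_m^\perp$.
   Context: $\boldsymbol 1_m^\perp=\{\boldsymbol v\in\mathbb R^m:\boldsymbol 1_m^\top\boldsymbol v=0\}$ and $\boldsymbol P=\boldsymbol I_m-\frac1m\boldsymbol 1_m\boldsymbol 1_m^\top$ is the orthogonal projector onto it. For $\rho\in[0,1)$, $\mathcal G_\rho=\{\boldsymbol 1_m+\boldsymbol e:\ \boldsymbol e\in\boldsymbol 1_m^\perp,\ \|\boldsymbol e\|_\infty\le\rho\}$. The objective is $f(\boldsymbol\xi,\boldsymbol\gamma)=\frac1{2mp}\sum_{l=1}^p\|\mathrm{diag}(\boldsymbol\gamma)\boldsymbol A_l\boldsymbol\xi-\mathrm{diag}(\boldsymbol g)\boldsymbol A_l\boldsymbol x\|^2$ where the rows of the matrices $\boldsymbol A_l\in\mathbb R^{m\times n}$ are i.i.d. centred isotropic random vectors ($\mathbb E\boldsymbol a\boldsymbol a^\top=\boldsymbol I_n$); its expectation is the $F$ given in the claim. *)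

theory Defs
  imports "HOL-Analysis.Analysis"
begin

text \<open>Vectors in R^n and R^m are modelled as real^'n and real^'m (n = CARD('n), m = CARD('m)).\<close>

definition ones :: "real^'m" where
  "ones = (\<chi> i. 1)"

definition ones_perp :: "(real^'m) set" where
  "ones_perp = {v. ones \<bullet> v = 0}"

definition projP :: "real^'m^'m" where
  "projP = mat 1 - (\<chi> i j. 1 / real CARD('m))"

definition G_rho :: "real \<Rightarrow> (real^'m) set" where
  "G_rho \<rho> = {ones + e | e. e \<in> ones_perp \<and> (\<forall>i. \<bar>e $ i\<bar> \<le> \<rho>)}"

definition Pi_plus :: "(real^'m) set" where
  "Pi_plus = {v. (\<forall>i. 0 \<le> v $ i) \<and> ones \<bullet> v = real CARD('m)}"

definition outer :: "real^'a \<Rightarrow> real^'b \<Rightarrow> real^'b^'a" where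
  "outer a b = (\<chi> i j. a $ i * b $ j)"

definition grad_xi :: "real^'n \<Rightarrow> real^'m \<Rightarrow> real^'n \<Rightarrow> real^'m \<Rightarrow> real^'n" where
  "grad_xi \<xi> \<gamma> x g = (1 / real CARD('m)) *\<^sub>R ((norm \<gamma>)\<^sup>2 *\<^sub>R \<xi> - (\<gamma> \<bullet> g) *\<^sub>R x)"

definition proj_grad_gamma :: "real^'n \<Rightarrow> real^'m \<Rightarrow> real^'n \<Rightarrow> real^'m \<Rightarrow> real^'m" where
  "proj_grad_gamma \<xi> \<gamma> x g =
     (1 / real CARD('m)) *\<^sub>R ((norm \<xi>)\<^sup>2 *\<^sub>R (\<gamma> - ones) - (\<xi> \<bullet> x) *\<^sub>R (g - ones))"

text \<open>Quadratic form u^T H u of the block matrix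
  H = (1/m) [ |g|^2 I_n , x e^T ; e x^T , |x|^2 P ] at u = (u1, u2).\<close>
definition H_quad :: "real^'n \<Rightarrow> real^'m \<Rightarrow> real^'n \<Rightarrow> real^'m \<Rightarrow> real" where
  "H_quad x g u1 u2 = (let e = g - ones in
     (1 / real CARD('m)) *
       (u1 \<bullet> (((norm g)\<^sup>2 *\<^sub>R mat 1) *v u1) + u1 \<bullet> (outer x e *v u2)
        + u2 \<bullet> (outer e x *v u1) + u2 \<bullet> (((norm x)\<^sup>2 *\<^sub>R projP) *v u2)))"

end

theory Submission
  imports Defs
begin

lemma outer_mv: "outer a b *v v = (b \<bullet> v) *\<^sub>R a"
  by (simp add: outer_def matrix_vector_mult_def vec_eq_iff inner_vec_def sum_distrib_left mult.commute mult.left_commute)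

lemma scaleR_mv: "((c::real) *\<^sub>R (M::real^'n^'m)) *v v = c *\<^sub>R (M *v v)"
  by (simp add: matrix_vector_mult_def vec_eq_iff sum_distrib_left mult.assoc real_scaleR_def)

lemma projP_mv: "(v::real^'m) \<in> ones_perp \<Longrightarrow> projP *v v = v"
proof -
  assume "v \<in> ones_perp"
  hence s: "(\<Sum>i\<in>UNIV. v $ i) = 0" by (simp add: ones_perp_def ones_def inner_vec_def)
  have "(\<chi> i j. 1 / real CARD('m)) *v v = (0::real^'m)"
    by (simp add: matrix_vector_mult_def vec_eq_iff s flip: sum_divide_distrib)
  thus ?thesis by (simp add: projP_def matrix_vector_mult_diff_rdistrib)
qed

lemma ones_ones: "(ones::real^'m) \<bullet> ones = real CARD('m)"
  by (simp add: ones_def inner_vec_def)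

lemma pos_quad:
  fixes A E X U V a b :: real
  assumes "A = real m + E\<^sup>2" "m > 0" "\<bar>a\<bar> \<le> U * X" "\<bar>b\<bar> \<le> E * V"
    "0 \<le> E" "0 \<le> U" "0 \<le> V" "X > 0" "U \<noteq> 0 \<or> V \<noteq> 0"
  shows "A * U\<^sup>2 + 2 * a * b + X\<^sup>2 * V\<^sup>2 > 0"
proof -
  have "\<bar>a * b\<bar> \<le> (U*X) * (E*V)" unfolding abs_mult
    by (rule mult_mono) (use assms in auto)
  hence ab: "2*a*b \<ge> - 2 * (U*X) * (E*V)" by (simp add: abs_le_iff algebra_simps)
  have sq: "0 \<le> (E*U - X*V)\<^sup>2" by simp
  have "A * U\<^sup>2 + 2 * a * b + X\<^sup>2 * V\<^sup>2 \<ge> real m * U\<^sup>2 + (E*U - X*V)\<^sup>2"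
    using ab assms(1) by (simp add: power2_eq_square algebra_simps)
  moreover have "real m * U\<^sup>2 + (E*U - X*V)\<^sup>2 > 0"
  proof (cases "U = 0")
    case True
    then have "V \<noteq> 0" using assms by auto
    with True assms show ?thesis by (simp add: power2_eq_square)
  next
    case False
    then show ?thesis using assms by (simp add: add_pos_nonneg)
  qed
  ultimately show ?thesis by linarith
qed

theorem mainTheorem1:
  fixes \<rho> :: real and x :: "real^'n" and g :: "real^'m"
  assumes "0 \<le> \<rho>" and "\<rho> < 1"
    and "x \<noteq> 0"
    and "g \<in> G_rho \<rho>"
  shows "(\<forall>\<xi> :: real^'n. \<forall>\<gamma> \<in> Pi_plus.
            (grad_xi \<xi> \<gamma> x g = 0 \<and> proj_grad_gamma \<xi> \<gamma> x g = 0) \<longleftrightarrow> (\<xi> = x \<and> \<gamma> = g))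
         \<and> g \<in> Pi_plus
         \<and> (\<forall>u1 :: real^'n. \<forall>u2 \<in> ones_perp. (u1, u2) \<noteq> (0, 0) \<longrightarrow> H_quad x g u1 u2 > 0)"
proof -
  obtain e where g: "g = ones + e" and eperp: "ones \<bullet> e = 0" and eb: "\<And>i. \<bar>e $ i\<bar> \<le> \<rho>"
    using assms(4) unfolding G_rho_def ones_perp_def by blast
  define m where "m = real CARD('m)"
  have m0: "m > 0" unfolding m_def by simp
  have oo: "(ones::real^'m) \<bullet> ones = m" using ones_ones[where 'm='m] m_def by simp
  have ge: "g - ones = e" using g by simp
  have gi: "\<And>i. g $ i \<ge> 1 - \<rho>" using eb g by (simp add: ones_def abs_le_iff) (smt (verit) eb abs_le_iff)
  have gPi: "g \<in> Pi_plus"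
    unfolding Pi_plus_def
  proof (intro CollectI conjI allI)
    fix i show "0 \<le> g $ i" using gi[of i] assms(2) by linarith
  next
    show "ones \<bullet> g = real CARD('m)" using eperp oo m_def by (simp add: g inner_add_right)
  qed
  have ng: "(norm g)\<^sup>2 = m + (norm e)\<^sup>2"
    by (simp add: power2_norm_eq_inner g inner_add_left inner_add_right inner_commute eperp oo)
  have nx: "norm x > 0" using assms(3) by simp
  have part1: "\<forall>\<xi> :: real^'n. \<forall>\<gamma> \<in> Pi_plus.
            (grad_xi \<xi> \<gamma> x g = 0 \<and> proj_grad_gamma \<xi> \<gamma> x g = 0) \<longleftrightarrow> (\<xi> = x \<and> \<gamma> = g)"
  proof (intro allI ballI iffI)
    fix \<xi> :: "real^'n" and \<gamma> :: "real^'m"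
    assume "\<xi> = x \<and> \<gamma> = g"
    then show "grad_xi \<xi> \<gamma> x g = 0 \<and> proj_grad_gamma \<xi> \<gamma> x g = 0"
      by (simp add: grad_xi_def proj_grad_gamma_def power2_norm_eq_inner)
  next
    fix \<xi> :: "real^'n" and \<gamma> :: "real^'m"
    assume gam: "\<gamma> \<in> Pi_plus" and st: "grad_xi \<xi> \<gamma> x g = 0 \<and> proj_grad_gamma \<xi> \<gamma> x g = 0"
    have s1: "(norm \<gamma>)\<^sup>2 *\<^sub>R \<xi> = (\<gamma> \<bullet> g) *\<^sub>R x"
      using st m0 unfolding grad_xi_def m_def by simp
    have s2: "(norm \<xi>)\<^sup>2 *\<^sub>R (\<gamma> - ones) = (\<xi> \<bullet> x) *\<^sub>R e"
      using st m0 ge unfolding proj_grad_gamma_def m_def by simp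
    have gpos: "\<And>i. \<gamma> $ i \<ge> 0" and gsum: "ones \<bullet> \<gamma> = m"
      using gam unfolding Pi_plus_def m_def by auto
    have "\<gamma> \<bullet> g \<ge> (1 - \<rho>) * (ones \<bullet> \<gamma>)"
    proof -
      have "(1 - \<rho>) * (ones \<bullet> \<gamma>) = (\<Sum>i\<in>UNIV. \<gamma> $ i * (1 - \<rho>))"
        by (simp add: ones_def inner_vec_def sum_distrib_left mult.commute)
      also have "\<dots> \<le> (\<Sum>i\<in>UNIV. \<gamma> $ i * g $ i)"
        by (rule sum_mono) (use gpos gi in \<open>simp add: mult_left_mono\<close>)
      finally show ?thesis by (simp add: inner_vec_def)
    qed
    hence gg: "\<gamma> \<bullet> g > 0" using gsum m0 assms(2)
      by (smt (verit) mult_pos_pos)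
    have ngam: "(norm \<gamma>)\<^sup>2 > 0" using gg by (cases "\<gamma> = 0") auto
    define c where "c = (\<gamma> \<bullet> g) / (norm \<gamma>)\<^sup>2"
    have c0: "c > 0" unfolding c_def using gg ngam by simp
    have xi: "\<xi> = c *\<^sub>R x"
    proof -
      have "\<xi> = (1/(norm \<gamma>)\<^sup>2) *\<^sub>R ((norm \<gamma>)\<^sup>2 *\<^sub>R \<xi>)" using ngam by simp
      also have "\<dots> = c *\<^sub>R x" using s1 by (simp add: c_def)
      finally show ?thesis .
    qed
    have "(c * c * (norm x)\<^sup>2) *\<^sub>R (\<gamma> - ones) = (c * (norm x)\<^sup>2) *\<^sub>R e"
    proof -
      have a: "(norm \<xi>)\<^sup>2 = c * c * (norm x)\<^sup>2" unfolding xi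
        by (simp add: power2_norm_eq_inner algebra_simps power2_eq_square)
      have b: "\<xi> \<bullet> x = c * (norm x)\<^sup>2" unfolding xi
        by (simp add: power2_norm_eq_inner)
      show ?thesis using s2 unfolding a b .
    qed
    hence "(c * (norm x)\<^sup>2) *\<^sub>R (c *\<^sub>R (\<gamma> - ones)) = (c * (norm x)\<^sup>2) *\<^sub>R e"
      by (simp add: algebra_simps)
    hence ce: "c *\<^sub>R (\<gamma> - ones) = e"
    proof -
      assume h: "(c * (norm x)\<^sup>2) *\<^sub>R (c *\<^sub>R (\<gamma> - ones)) = (c * (norm x)\<^sup>2) *\<^sub>R e"
      have "c * (norm x)\<^sup>2 \<noteq> 0" using c0 nx by simp
      with h show ?thesis using scaleR_cancel_left by blast
    qed
    have gam_eq: "\<gamma> = ones + (1/c) *\<^sub>R e"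
    proof -
      have "(1/c) *\<^sub>R e = (1/c) *\<^sub>R (c *\<^sub>R (\<gamma> - ones))" using ce by simp
      also have "\<dots> = \<gamma> - ones" using c0 by simp
      finally show ?thesis by simp
    qed
    define E where "E = e \<bullet> e"
    have n2: "(norm \<gamma>)\<^sup>2 = m + E / (c*c)"
      by (simp add: power2_norm_eq_inner gam_eq inner_add_left inner_add_right inner_commute eperp oo E_def)
    have gg2: "\<gamma> \<bullet> g = m + E / c"
      by (simp add: gam_eq g inner_add_left inner_add_right inner_commute eperp oo E_def)
    have "c * (norm \<gamma>)\<^sup>2 = \<gamma> \<bullet> g" unfolding c_def using ngam by simp
    hence "c * m + E / c = m + E / c" using c0 unfolding n2 gg2
      by (simp add: algebra_simps power2_eq_square)
    hence c1: "c = 1" using m0 by simp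
    show "\<xi> = x \<and> \<gamma> = g" using xi gam_eq c1 g by simp
  qed
  have part3: "\<forall>u1 :: real^'n. \<forall>u2 \<in> ones_perp. (u1, u2) \<noteq> (0, 0) \<longrightarrow> H_quad x g u1 u2 > 0"
  proof (intro allI ballI impI)
    fix u1 :: "real^'n" and u2 :: "real^'m"
    assume u2: "u2 \<in> ones_perp" and nz: "(u1, u2) \<noteq> (0, 0)"
    have H: "H_quad x g u1 u2 = (1/m) * ((norm g)\<^sup>2 * (norm u1)\<^sup>2 + 2 * (u1 \<bullet> x) * (e \<bullet> u2)
               + (norm x)\<^sup>2 * (norm u2)\<^sup>2)"
      unfolding H_quad_def Let_def ge m_def
      by (simp add: scaleR_mv outer_mv projP_mv[OF u2] power2_norm_eq_inner inner_commute algebra_simps)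
    have "(norm g)\<^sup>2 * (norm u1)\<^sup>2 + 2 * (u1 \<bullet> x) * (e \<bullet> u2) + (norm x)\<^sup>2 * (norm u2)\<^sup>2 > 0"
    proof (rule pos_quad[where m = "CARD('m)" and E = "norm e"])
      show "(norm g)\<^sup>2 = real CARD('m) + (norm e)\<^sup>2" using ng m_def by simp
      show "\<bar>u1 \<bullet> x\<bar> \<le> norm u1 * norm x" by (rule Cauchy_Schwarz_ineq2)
      show "\<bar>e \<bullet> u2\<bar> \<le> norm e * norm u2" by (rule Cauchy_Schwarz_ineq2)
      show "norm u1 \<noteq> 0 \<or> norm u2 \<noteq> 0" using nz by auto
    qed (use nx in auto)
    thus "H_quad x g u1 u2 > 0" using H m0 by simp
  qed
  show ?thesis using part1 gPi part3 by blast
qed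

end
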